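(* Let $\{\Pi_{\bm{x}}\}_{\bm{x}\in\{0,1\}^n}$ be a POVM on $(\mathbb{C}^2)^{\otimes n}$. For $\theta\in\mathbb{R}$ let $|\Phi_\theta\rangle=|+_\theta\rangle^{\otimes n}$ with $|+_\theta\rangle=(|0\rangle+e^{i\theta}|1\rangle)/\sqrt2$, let $W^\theta_\Phi=\frac{1}{2^n}\mathbb{1}-|\Phi_\theta\rangle\langle\Phi_\theta|$, and let $\mathscr{Q}^\theta_\Phi(\Pi_{\bm{x}})=2^n\,|\operatorname{tr}[W^\theta_\Phi\Pi_{\bm{x}}]|$. Then for every $\bm{x}$, $$\mathscr{Q}^\theta_\Phi(\Pi_{\bm{x}})=2\left|\sum_{\bm{y}<\bm{z}}\Big(-\operatorname{Re}[\Pi_{\bm{x}}(\bm{y},\bm{z})]\cos[h(\bm{y},\bm{z})\theta]+\operatorname{Im}[\Pi_{\bm{x}}(\bm{y},\bm{z})]\sin[h(\bm{y},\bm{z})\theta]\Big)\right|,$$ where $h(\bm{y},\bm{z})=|\bm{z}|-|\bm{y}|$.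
   Context: $\Pi(\bm{y},\bm{z})=\langle\bm{y}|\Pi|\bm{z}\rangle$ is the entry in row $\bm{y}$, column $\bm{z}$ with respect to the computational basis $\{|\bm{y}\rangle:\bm{y}\in\{0,1\}^n\}$; $|\bm{y}|$ is the Hamming weight of $\bm{y}$; the sum over $\bm{y}<\bm{z}$ runs over all pairs of distinct bit strings with respect to a fixed total order (e.g. lexicographic), so that each unordered pair is counted once. *)

theory Defs
  imports Complex_Main "HOL-Library.List_Lexorder"
begin

text \<open>Computational basis of (C^2)^n indexed by bit strings (bool lists of length n).
 Operators are matrices bool list => bool list => complex, restricted to these indices.
 Bit strings are totally ordered lexicographically (False < True).\<close>

definition bitstrings :: "nat \<Rightarrow> bool list set" where
  "bitstrings n = {xs. length xs = n}"

definition hamming_weight :: "bool list \<Rightarrow> nat" where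
  "hamming_weight xs = length (filter id xs)"

type_synonym op = "bool list \<Rightarrow> bool list \<Rightarrow> complex"

definition hermitian :: "nat \<Rightarrow> op \<Rightarrow> bool" where
  "hermitian n A \<longleftrightarrow> (\<forall>y\<in>bitstrings n. \<forall>z\<in>bitstrings n. A z y = cnj (A y z))"

definition psd :: "nat \<Rightarrow> op \<Rightarrow> bool" where
  "psd n A \<longleftrightarrow> hermitian n A \<and>
     (\<forall>v :: bool list \<Rightarrow> complex.
        let q = (\<Sum>y\<in>bitstrings n. \<Sum>z\<in>bitstrings n. cnj (v y) * A y z * v z)
        in Im q = 0 \<and> Re q \<ge> 0)"

definition is_POVM :: "nat \<Rightarrow> (bool list \<Rightarrow> op) \<Rightarrow> bool" where
  "is_POVM n P \<longleftrightarrow> (\<forall>x\<in>bitstrings n. psd n (P x)) \<and>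
     (\<forall>y\<in>bitstrings n. \<forall>z\<in>bitstrings n.
        (\<Sum>x\<in>bitstrings n. P x y z) = (if y = z then 1 else 0))"

definition trace_prod :: "nat \<Rightarrow> op \<Rightarrow> op \<Rightarrow> complex" where
  "trace_prod n A B = (\<Sum>y\<in>bitstrings n. \<Sum>z\<in>bitstrings n. A y z * B z y)"

definition plus_amp :: "real \<Rightarrow> bool \<Rightarrow> complex" where
  "plus_amp \<theta> b = (if b then cis \<theta> else 1) / complex_of_real (sqrt 2)"

definition Phi :: "real \<Rightarrow> bool list \<Rightarrow> complex" where
  "Phi \<theta> y = prod_list (map (plus_amp \<theta>) y)"

definition W_Phi :: "nat \<Rightarrow> real \<Rightarrow> op" where
  "W_Phi n \<theta> y z = (if y = z then 1 / 2 ^ n else 0) - Phi \<theta> y * cnj (Phi \<theta> z)"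

definition Q_Phi :: "nat \<Rightarrow> real \<Rightarrow> op \<Rightarrow> real" where
  "Q_Phi n \<theta> A = 2 ^ n * cmod (trace_prod n (W_Phi n \<theta>) A)"

end

theory Submission
  imports Defs
begin

lemma Phi_eq: "Phi \<theta> y = cis (real (hamming_weight y) * \<theta>) / complex_of_real (sqrt 2) ^ length y"
proof (induction y)
  case Nil
  then show ?case by (simp add: Phi_def hamming_weight_def)
next
  case (Cons a y)
  have "Phi \<theta> (a # y) = plus_amp \<theta> a * Phi \<theta> y" by (simp add: Phi_def)
  also have "\<dots> = cis (real (hamming_weight (a#y)) * \<theta>) / complex_of_real (sqrt 2) ^ length (a#y)"
  proof (cases a)
    case True
    have "cis \<theta> * cis (real (hamming_weight y) * \<theta>) = cis (real (hamming_weight (a#y)) * \<theta>)"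
      using True by (simp add: cis_mult hamming_weight_def algebra_simps)
    then show ?thesis using True Cons.IH by (simp add: plus_amp_def)
  next
    case False
    then show ?thesis using Cons.IH by (simp add: plus_amp_def hamming_weight_def)
  qed
  finally show ?case .
qed

lemma s2: "complex_of_real (sqrt 2) ^ n * complex_of_real (sqrt 2) ^ n = 2 ^ n"
proof -
  have "complex_of_real (sqrt 2) ^ n * complex_of_real (sqrt 2) ^ n = complex_of_real ((sqrt 2 * sqrt 2) ^ n)"
    by (simp only: power_mult_distrib of_real_mult of_real_power)
  also have "\<dots> = 2 ^ n" by simp
  finally show ?thesis .
qed

lemma fin_bs: "finite (bitstrings n)"
proof -
  have "finite {xs::bool list. set xs \<subseteq> UNIV \<and> length xs = n}"
    by (rule finite_lists_length_eq) simp
  thus ?thesis by (simp add: bitstrings_def)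
qed

lemma Phi_prod:
  assumes "length y = n" "length z = n"
  shows "Phi \<theta> y * cnj (Phi \<theta> z) = cis ((real (hamming_weight y) - real (hamming_weight z)) * \<theta>) / 2 ^ n"
proof -
  have "Phi \<theta> y * cnj (Phi \<theta> z) = (cis (real (hamming_weight y) * \<theta>) * cis (- (real (hamming_weight z) * \<theta>)))
     / (complex_of_real (sqrt 2) ^ n * complex_of_real (sqrt 2) ^ n)"
    using assms by (simp add: Phi_eq cis_cnj)
  also have "cis (real (hamming_weight y) * \<theta>) * cis (- (real (hamming_weight z) * \<theta>)) =
     cis ((real (hamming_weight y) - real (hamming_weight z)) * \<theta>)"
    by (simp add: cis_mult left_diff_distrib)
  finally show ?thesis by (simp only: s2)
qed

theorem theorem1:
  fixes n :: nat and P :: "bool list \<Rightarrow> op" and \<theta> :: real and x :: "bool list"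
  assumes "is_POVM n P" and "x \<in> bitstrings n"
  shows "Q_Phi n \<theta> (P x) =
    2 * \<bar>\<Sum>(y, z)\<in>{(y, z). y \<in> bitstrings n \<and> z \<in> bitstrings n \<and> y < z}.
           - Re (P x y z) * cos ((real (hamming_weight z) - real (hamming_weight y)) * \<theta>)
           + Im (P x y z) * sin ((real (hamming_weight z) - real (hamming_weight y)) * \<theta>)\<bar>"
proof -
  define B where "B = bitstrings n"
  define A where "A = P x"
  define hw where "hw = (\<lambda>y. real (hamming_weight y))"
  define L where "L = {(y, z). y \<in> B \<and> z \<in> B \<and> y < z}"
  define U where "U = {(y, z). y \<in> B \<and> z \<in> B \<and> z < y}"
  define D where "D = (\<lambda>y. (y, y)) ` B"
  define f where "f = (\<lambda>(y, z). cis ((hw y - hw z) * \<theta>) * A z y)"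
  define g where "g = (\<lambda>(y, z). cos ((hw z - hw y) * \<theta>) * Re (A y z) - sin ((hw z - hw y) * \<theta>) * Im (A y z))"
  have herm: "\<And>y z. y \<in> B \<Longrightarrow> z \<in> B \<Longrightarrow> A z y = cnj (A y z)"
    using assms unfolding is_POVM_def psd_def hermitian_def A_def B_def by blast
  have finB: "finite B" using fin_bs B_def by simp
  have finBB: "finite (B \<times> B)" using finB by simp
  have BB: "B \<times> B = D \<union> (L \<union> U)"
    unfolding D_def L_def U_def using linorder_neqE by (auto simp: image_iff)
  have finL: "finite L" by (rule finite_subset[OF _ finBB]) (auto simp: L_def)
  have finU: "finite U" by (rule finite_subset[OF _ finBB]) (auto simp: U_def)
  have finD: "finite D" using finB D_def by simp
  have disj1: "D \<inter> (L \<union> U) = {}" unfolding D_def L_def U_def by auto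
  have disj2: "L \<inter> U = {}" unfolding L_def U_def by auto
  have sumBB: "sum f (B \<times> B) = sum f D + (sum f L + sum f U)"
    unfolding BB using finD finL finU disj1 disj2
    by (simp add: sum.union_disjoint)
  have sumD: "sum f D = (\<Sum>y\<in>B. A y y)"
    unfolding D_def by (subst sum.reindex) (auto simp: inj_on_def f_def)
  have U_eq: "U = prod.swap ` L" unfolding U_def L_def by auto
  have sumU: "sum f U = (\<Sum>p\<in>L. f (prod.swap p))"
    unfolding U_eq by (subst sum.reindex) (auto simp: inj_on_def)
  have pt: "f p + f (prod.swap p) = complex_of_real (2 * g p)" if pL: "p \<in> L" for p
  proof -
    obtain y z where p: "p = (y, z)" and yz: "y \<in> B" "z \<in> B" using pL unfolding L_def by blast
    define w where "w = cis ((hw z - hw y) * \<theta>) * A y z"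
    have "f p = cnj w" unfolding p f_def w_def using herm[OF yz]
      by (simp add: cis_cnj algebra_simps)
    moreover have "f (prod.swap p) = w" unfolding p f_def w_def by simp
    moreover have "Re w = g p" unfolding w_def g_def p by (simp add: cis.ctr)
    ultimately show ?thesis by (metis add.commute complex_add_cnj)
  qed
  have tr: "2 ^ n * trace_prod n (W_Phi n \<theta>) A = (\<Sum>y\<in>B. A y y) - sum f (B \<times> B)"
  proof -
    have "2 ^ n * trace_prod n (W_Phi n \<theta>) A =
       (\<Sum>y\<in>B. \<Sum>z\<in>B. (if y = z then A z y else 0) - f (y, z))"
      unfolding trace_prod_def B_def[symmetric] sum_distrib_left
      apply (rule sum.cong[OF refl])+
      apply (simp add: W_Phi_def Phi_prod B_def bitstrings_def f_def hw_def algebra_simps)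
      done
    also have "\<dots> = (\<Sum>y\<in>B. A y y) - (\<Sum>y\<in>B. \<Sum>z\<in>B. f (y, z))"
      using finB by (simp add: sum_subtractf)
    also have "(\<Sum>y\<in>B. \<Sum>z\<in>B. f (y, z)) = sum f (B \<times> B)"
      by (simp add: sum.cartesian_product)
    finally show ?thesis .
  qed
  have key: "2 ^ n * trace_prod n (W_Phi n \<theta>) A = - complex_of_real (2 * sum g L)"
  proof -
    have "2 ^ n * trace_prod n (W_Phi n \<theta>) A = - (\<Sum>p\<in>L. f p + f (prod.swap p))"
      unfolding tr sumBB sumD sumU by (simp add: sum.distrib)
    also have "\<dots> = - (\<Sum>p\<in>L. complex_of_real (2 * g p))"
      using pt by simp
    also have "\<dots> = - complex_of_real (2 * sum g L)"
      by (simp add: sum_distrib_left)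
    finally show ?thesis .
  qed
  have "Q_Phi n \<theta> A = cmod (2 ^ n * trace_prod n (W_Phi n \<theta>) A)"
    unfolding Q_Phi_def by (simp add: norm_mult norm_power)
  also have "\<dots> = 2 * \<bar>sum g L\<bar>" unfolding key norm_minus_cancel norm_of_real by simp
  also have "sum g L = - (\<Sum>(y, z)\<in>L.
           - Re (A y z) * cos ((real (hamming_weight z) - real (hamming_weight y)) * \<theta>)
           + Im (A y z) * sin ((real (hamming_weight z) - real (hamming_weight y)) * \<theta>))"
    unfolding sum_negf[symmetric] g_def hw_def
    by (rule sum.cong) (auto simp: algebra_simps)
  finally show ?thesis unfolding A_def L_def B_def by simp
qed

end
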